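(* Let $\varepsilon>0$ and let $U_\varepsilon$ be a bounded, smooth solution of $$\begin{cases}\partial_tU_\varepsilon=\Delta U_\varepsilon&\text{in }\mathbb{R}^{m+1}_+\times(0,\infty),\\ U_\varepsilon(\cdot,0)=U_0&\text{in }\mathbb{R}^{m+1}_+,\\ \lim_{y\to0^+}\partial_yU_\varepsilon=-\frac{c_{\frac12}}{\varepsilon^2}(1-|U_\varepsilon|^2)U_\varepsilon&\text{on }\mathbb{R}^m\times\{0\}\times(0,\infty).\end{cases}$$ Then $|U_\varepsilon|\le1$ in $\mathbb{R}^{m+1}_+\times(0,\infty)$.
   Context: $\mathbb{R}^{m+1}_+=\{(x,y):x\in\mathbb{R}^m,y>0\}$; $c_{\frac12}=1$. $u_0\in\dot H^{1/2}(\mathbb{R}^m,\mathbb{R}^\ell)$ satisfies $|u_0|=1$ a.e., and $U_0$ is its harmonic extension to $\mathbb{R}^{m+1}_+$ (so $U_0(x,0)=u_0(x)$). *)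

theory Defs
  imports "HOL-Analysis.Analysis"
begin

fun higher_dir :: "('a::real_normed_vector \<Rightarrow> 'b::real_normed_vector) \<Rightarrow> 'a list \<Rightarrow> 'a \<Rightarrow> 'b" where
  "higher_dir f [] = f"
| "higher_dir f (v # vs) = (\<lambda>p. frechet_derivative (higher_dir f vs) (at p) v)"

definition smooth_on :: "'a::real_normed_vector set \<Rightarrow> ('a \<Rightarrow> 'b::real_normed_vector) \<Rightarrow> bool" where
  "smooth_on S f \<longleftrightarrow> open S \<and>
     (\<forall>vs. higher_dir f vs differentiable_on S \<and> continuous_on S (higher_dir f vs))"

text \<open>Space-time points ((x,y),t), x in R^m, y > 0 the extension variable, t time.\<close>
definition e_x :: "'m::finite \<Rightarrow> ((real^'m) \<times> real) \<times> real" where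
  "e_x i = ((axis i 1, 0), 0)"
definition e_y :: "((real^'m::finite) \<times> real) \<times> real" where
  "e_y = ((0, 1), 0)"
definition e_t :: "((real^'m::finite) \<times> real) \<times> real" where
  "e_t = ((0, 0), 1)"

definition uncurry3 :: "(real^'m \<Rightarrow> real \<Rightarrow> real \<Rightarrow> 'b) \<Rightarrow> ((real^'m) \<times> real) \<times> real \<Rightarrow> 'b" where
  "uncurry3 U = (\<lambda>((x, y), t). U x y t)"

definition laplacian_xy :: "(real^'m::finite \<Rightarrow> real \<Rightarrow> real \<Rightarrow> 'b::real_normed_vector)
    \<Rightarrow> real^'m \<Rightarrow> real \<Rightarrow> real \<Rightarrow> 'b" where
  "laplacian_xy U x y t =
     (\<Sum>i\<in>UNIV. higher_dir (uncurry3 U) [e_x i, e_x i] ((x, y), t))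
     + higher_dir (uncurry3 U) [e_y, e_y] ((x, y), t)"

definition dt :: "(real^'m::finite \<Rightarrow> real \<Rightarrow> real \<Rightarrow> 'b::real_normed_vector)
    \<Rightarrow> real^'m \<Rightarrow> real \<Rightarrow> real \<Rightarrow> 'b" where
  "dt U x y t = higher_dir (uncurry3 U) [e_t] ((x, y), t)"

definition dy :: "(real^'m::finite \<Rightarrow> real \<Rightarrow> real \<Rightarrow> 'b::real_normed_vector)
    \<Rightarrow> real^'m \<Rightarrow> real \<Rightarrow> real \<Rightarrow> 'b" where
  "dy U x y t = higher_dir (uncurry3 U) [e_y] ((x, y), t)"

definition hdot_half :: "(real^'m::finite \<Rightarrow> real^'l::finite) \<Rightarrow> bool" where
  "hdot_half u \<longleftrightarrow> u \<in> borel_measurable lborel \<and>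
     (\<integral>\<^sup>+ x. \<integral>\<^sup>+ z. ennreal (norm (u x - u z) ^ 2 / norm (x - z) ^ (CARD('m) + 1)) \<partial>lborel \<partial>lborel) < \<infinity>"

definition poisson_kernel :: "real^'m::finite \<Rightarrow> real \<Rightarrow> real" where
  "poisson_kernel x y =
     Gamma ((real CARD('m) + 1) / 2) / pi powr ((real CARD('m) + 1) / 2)
     * y / (norm x ^ 2 + y ^ 2) powr ((real CARD('m) + 1) / 2)"

definition harmonic_ext :: "(real^'m::finite \<Rightarrow> real^'l::finite) \<Rightarrow> real^'m \<Rightarrow> real \<Rightarrow> real^'l" where
  "harmonic_ext u x y = (\<integral>z. poisson_kernel (x - z) y *\<^sub>R u z \<partial>lborel)"

end

theory Submission
  imports Defs
begin

lemma layer_repr: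
  fixes c s :: real
  assumes c: "c \<ge> 0" and s: "s > 0"
  shows "(\<integral>\<^sup>+\<mu>. ennreal (indicator {0..c} \<mu> * (s * \<mu> powr (s - 1))) \<partial>lborel) = ennreal (c powr s)"
proof -
  have "((\<lambda>x. x powr (s - 1)) has_integral (c powr (s - 1 + 1) / (s - 1 + 1))) {0..c}"
    by (rule has_integral_powr_from_0) (use s c in auto)
  hence "((\<lambda>x. s * x powr (s - 1)) has_integral s * (c powr (s - 1 + 1) / (s - 1 + 1))) {0..c}"
    by (rule has_integral_mult_right)
  hence "((\<lambda>x. s * x powr (s - 1)) has_integral c powr s) {0..c}"
    using s by simp
  from nn_integral_has_integral_lebesgue[OF _ this] s show ?thesis by simp
qed

lemma ball_set:
  fixes \<mu> :: real and v :: "'a::euclidean_space"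
  assumes "0 < \<mu>" "\<mu> \<le> 1"
  shows "(\<mu> \<le> 1 / (1 + norm v ^ 2)) \<longleftrightarrow> v \<in> cball 0 (sqrt (1/\<mu> - 1))"
proof -
  have "(\<mu> \<le> 1 / (1 + norm v ^ 2)) \<longleftrightarrow> \<mu> * (1 + norm v ^ 2) \<le> 1"
    by (simp add: pos_le_divide_eq add_pos_nonneg)
  also have "\<dots> \<longleftrightarrow> norm v ^ 2 \<le> 1/\<mu> - 1"
    using assms by (simp add: field_simps)
  also have "\<dots> \<longleftrightarrow> norm v \<le> sqrt (1/\<mu> - 1)"
  proof -
    have "norm v = sqrt (norm v ^ 2)" by simp
    thus ?thesis by (metis real_sqrt_le_iff)
  qed
  finally show ?thesis by simp
qed

lemma sqrt_pow_powr:
  fixes x :: real assumes "x > 0"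
  shows "sqrt x ^ n = x powr (real n / 2)"
  using assms by (simp add: powr_half_sqrt[symmetric] powr_realpow[symmetric] powr_powr)

lemma beta_pt:
  fixes \<mu> :: real
  assumes "0 < \<mu>" "\<mu> < 1"
  shows "\<mu> powr ((real n + 1) / 2 - 1) * sqrt (1/\<mu> - 1) ^ n
       = \<mu> powr (1/2 - 1) * (1 - \<mu>) powr (real n / 2 + 1 - 1)"
proof -
  have q: "1/\<mu> - 1 = (1 - \<mu>) / \<mu>" using assms by (simp add: field_simps)
  have "sqrt (1/\<mu> - 1) ^ n = ((1 - \<mu>) / \<mu>) powr (real n / 2)"
    unfolding q using assms by (intro sqrt_pow_powr) (simp add: field_simps)
  also have "((1 - \<mu>) / \<mu>) powr (real n / 2) = (1 - \<mu>) powr (real n / 2) / \<mu> powr (real n / 2)"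
    using assms by (simp add: powr_divide)
  finally have "\<mu> powr ((real n + 1) / 2 - 1) * sqrt (1/\<mu> - 1) ^ n
      = (\<mu> powr ((real n + 1) / 2 - 1) / \<mu> powr (real n / 2)) * (1 - \<mu>) powr (real n / 2)"
    by simp
  also have "\<mu> powr ((real n + 1) / 2 - 1) / \<mu> powr (real n / 2) = \<mu> powr ((real n + 1) / 2 - 1 - real n / 2)"
    by (simp add: powr_diff)
  also have "(real n + 1) / 2 - 1 - real n / 2 = 1/2 - 1" by (simp add: field_simps)
  finally show ?thesis by simp
qed

lemma gamma_arith:
  fixes n :: nat
  defines "s \<equiv> (real n + 1) / 2"
  shows "s * unit_ball_vol (real n) * Beta (1/2) (real n / 2 + 1) = pi powr s / Gamma s"
proof -
  have s0: "s > 0" unfolding s_def by simp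
  have g1: "Gamma (real n / 2 + 1) > 0" by (intro Gamma_real_pos) simp
  have gs: "Gamma s > 0" using s0 by (intro Gamma_real_pos)
  have e: "1/2 + (real n / 2 + 1) = s + 1" unfolding s_def by (simp add: field_simps)
  have gp: "Gamma (s + 1) = s * Gamma s"
    by (rule Gamma_plus1) (metis nonpos_Ints_nonpos not_le s0)
  have "Beta (1/2) (real n / 2 + 1) = sqrt pi * Gamma (real n / 2 + 1) / (s * Gamma s)"
    unfolding Beta_def e by (simp add: Gamma_one_half_real gp)
  moreover have "pi powr s = pi powr (real n / 2) * sqrt pi"
    unfolding s_def by (simp add: powr_half_sqrt[symmetric] powr_add[symmetric] add_divide_distrib)
  ultimately show ?thesis
    unfolding unit_ball_vol_def
    using g1 gs s0 by (simp add: divide_simps del: Gamma_real_pos) (simp add: algebra_simps)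
qed

lemma J_integral:
  defines "n \<equiv> DIM('a::euclidean_space)"
  defines "s \<equiv> (real n + 1) / 2"
  shows "(\<integral>\<^sup>+v. ennreal ((1 + norm v ^ 2) powr (-s)) \<partial>(lborel::'a measure)) = ennreal (pi powr s / Gamma s)"
proof -
  have s0: "s > 0" unfolding s_def by simp
  define F where "F = (\<lambda>(v::'a) (\<mu>::real). ennreal (indicator {0..1 / (1 + norm v ^ 2)} \<mu> * (s * \<mu> powr (s - 1))))"
  have 1: "ennreal ((1 + norm v ^ 2) powr (-s)) = (\<integral>\<^sup>+\<mu>. F v \<mu> \<partial>lborel)" for v :: 'a
  proof -
    have "(1 / (1 + norm v ^ 2)) powr s = (1 + norm v ^ 2) powr (-s)"
      by (simp add: powr_divide powr_minus_divide add_pos_nonneg)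
    thus ?thesis unfolding F_def using layer_repr[of "1 / (1 + norm v ^ 2)" s] s0
      by (simp add: add_pos_nonneg)
  qed
  have meas: "case_prod F \<in> borel_measurable (lborel \<Otimes>\<^sub>M lborel)"
  proof -
    define C where "C = {x::'a\<times>real. 0 \<le> snd x \<and> snd x \<le> 1 / (1 + (norm (fst x))\<^sup>2)}"
    have "closed C" unfolding C_def
      by (intro closed_Collect_conj closed_Collect_le continuous_intros continuous_on_divide)
         (auto, metis add_pos_nonneg zero_less_one zero_le_power2 less_irrefl)
    hence [measurable]: "C \<in> sets borel" by (simp add: borel_closed)
    have [measurable]: "snd \<in> borel_measurable (borel :: ('a\<times>real) measure)"
      by (intro borel_measurable_continuous_onI continuous_intros)
    have e: "case_prod F = (\<lambda>x. ennreal (indicator C x * (s * snd x powr (s - 1))))"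
      unfolding F_def C_def by (auto simp: indicator_def fun_eq_iff)
    show ?thesis unfolding e lborel_prod by measurable
  qed
  have "(\<integral>\<^sup>+v. ennreal ((1 + norm v ^ 2) powr (-s)) \<partial>(lborel::'a measure))
      = (\<integral>\<^sup>+v. \<integral>\<^sup>+\<mu>. F v \<mu> \<partial>lborel \<partial>lborel)" by (simp add: 1)
  also have "\<dots> = (\<integral>\<^sup>+\<mu>. \<integral>\<^sup>+v. F v \<mu> \<partial>lborel \<partial>lborel)"
    by (rule lborel_pair.Fubini'[OF meas, symmetric])
  also have "\<dots> = (\<integral>\<^sup>+\<mu>. ennreal (indicator {0..1} \<mu> * (s * unit_ball_vol (real n) * (\<mu> powr (1/2 - 1) * (1 - \<mu>) powr (real n / 2 + 1 - 1)))) \<partial>lborel)"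
  proof (rule nn_integral_cong_AE)
    have "AE \<mu> in lborel. \<mu> \<noteq> 0" by (rule AE_lborel_singleton)
    moreover have "AE \<mu> in lborel. \<mu> \<noteq> 1" by (rule AE_lborel_singleton)
    ultimately show "AE \<mu> in lborel. (\<integral>\<^sup>+v. F v \<mu> \<partial>lborel) = ennreal (indicator {0..1} \<mu> * (s * unit_ball_vol (real n) * (\<mu> powr (1/2 - 1) * (1 - \<mu>) powr (real n / 2 + 1 - 1))))"
    proof eventually_elim
      case (elim \<mu>)
      show ?case
      proof (cases "0 < \<mu> \<and> \<mu> < 1")
        case True
        have "F v \<mu> = ennreal (s * \<mu> powr (s - 1)) * indicator (cball 0 (sqrt (1/\<mu> - 1))) v" for v
          using ball_set[of \<mu> v] True unfolding F_def by (auto simp: indicator_def)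
        hence "(\<integral>\<^sup>+v. F v \<mu> \<partial>lborel) = ennreal (s * \<mu> powr (s - 1)) * emeasure lborel (cball (0::'a) (sqrt (1/\<mu> - 1)))"
          by (simp add: nn_integral_cmult_indicator)
        also have "\<dots> = ennreal (s * \<mu> powr (s - 1) * (unit_ball_vol (real n) * sqrt (1/\<mu> - 1) ^ n))"
          using True s0 unfolding n_def by (subst emeasure_cball) (auto simp: ennreal_mult')
        also have "s * \<mu> powr (s - 1) * (unit_ball_vol (real n) * sqrt (1/\<mu> - 1) ^ n)
            = s * unit_ball_vol (real n) * (\<mu> powr ((real n + 1) / 2 - 1) * sqrt (1/\<mu> - 1) ^ n)"
          unfolding s_def by simp
        also have "\<dots> = s * unit_ball_vol (real n) * (\<mu> powr (1/2 - 1) * (1 - \<mu>) powr (real n / 2 + 1 - 1))"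
          using True by (subst beta_pt) auto
        finally show ?thesis using True by simp
      next
        case False
        hence "\<mu> < 0 \<or> \<mu> > 1" using elim by auto
        moreover have "1 / (1 + norm v ^ 2) \<le> 1" for v :: 'a
          by (simp add: add_pos_nonneg)
        ultimately have "\<mu> \<notin> {0..1 / (1 + norm v ^ 2)}" for v :: 'a
          by (metis atLeastAtMost_iff linorder_not_le order_le_less_trans)
        hence "F v \<mu> = 0" for v
          unfolding F_def by simp
        thus ?thesis using False elim by (auto simp: indicator_def)
      qed
    qed
  qed
  also have "\<dots> = ennreal (s * unit_ball_vol (real n) * Beta (1/2) (real n / 2 + 1))"
  proof -
    have "((\<lambda>t. t powr (1/2 - 1) * (1 - t) powr (real n / 2 + 1 - 1)) has_integral Beta (1/2) (real n / 2 + 1)) {0..1}"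
      by (rule has_integral_Beta_real) auto
    hence "((\<lambda>t. s * unit_ball_vol (real n) * (t powr (1/2 - 1) * (1 - t) powr (real n / 2 + 1 - 1))) has_integral s * unit_ball_vol (real n) * Beta (1/2) (real n / 2 + 1)) {0..1}"
      by (rule has_integral_mult_right)
    from nn_integral_has_integral_lebesgue[OF _ this] show ?thesis
      using s0 by (simp add: unit_ball_vol_def)
  qed
  also have "\<dots> = ennreal (pi powr s / Gamma s)"
    using gamma_arith[of n] unfolding s_def by simp
  finally show ?thesis .
qed

lemma poisson_scaled:
  fixes v :: "real^'m::finite" and y :: real
  assumes y: "y > 0"
  defines "s \<equiv> (real CARD('m) + 1) / 2"
  shows "y ^ CARD('m) * poisson_kernel (y *\<^sub>R v) y = Gamma s / pi powr s * (1 + norm v ^ 2) powr (-s)"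
proof -
  let ?n = "CARD('m)"
  have X: "1 + norm v ^ 2 > 0" by (simp add: add_pos_nonneg)
  have e0: "norm (y *\<^sub>R v) ^ 2 + y ^ 2 = y ^ 2 * (1 + norm v ^ 2)"
    using y by (simp add: power_mult_distrib ring_distribs)
  have "(norm (y *\<^sub>R v) ^ 2 + y ^ 2) powr s = (y ^ 2 * (1 + norm v ^ 2)) powr s"
    by (simp only: e0)
  also have "\<dots> = (y ^ 2) powr s * (1 + norm v ^ 2) powr s"
    by (rule powr_mult)
  also have "(y ^ 2) powr s = y powr (real ?n + 1)"
  proof -
    have "y ^ 2 = y powr (real 2)" using y by (simp only: powr_realpow)
    hence "(y ^ 2) powr s = y powr (real 2 * s)" by (simp only: powr_powr)
    also have "real 2 * s = real ?n + 1" unfolding s_def by simp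
    finally show ?thesis .
  qed
  also have "y powr (real ?n + 1) = y ^ ?n * y"
  proof -
    have "y powr (real ?n + 1) = y powr (real ?n) * y powr 1" by (simp only: powr_add)
    thus ?thesis using y by (simp only: powr_realpow powr_one_gt_zero_iff) simp
  qed
  finally have den: "(norm (y *\<^sub>R v) ^ 2 + y ^ 2) powr s = y ^ ?n * y * (1 + norm v ^ 2) powr s" .
  have "y ^ ?n * poisson_kernel (y *\<^sub>R v) y
      = y ^ ?n * (Gamma s / pi powr s * y / (y ^ ?n * y * (1 + norm v ^ 2) powr s))"
    unfolding poisson_kernel_def s_def[symmetric] den ..
  also have "\<dots> = Gamma s / pi powr s / (1 + norm v ^ 2) powr s"
  proof -
    have gen: "\<And>a b c d::real. a > 0 \<Longrightarrow> b > 0 \<Longrightarrow> a * (c * b / (a * b * d)) = c / d"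
      by (simp add: field_simps)
    show ?thesis by (rule gen) (use y in auto)
  qed
  also have "\<dots> = Gamma s / pi powr s * (1 + norm v ^ 2) powr (-s)"
    by (simp add: powr_minus_divide)
  finally show ?thesis .
qed

lemma poisson_integral:
  fixes x :: "real^'m::finite" and y :: real
  assumes y: "y > 0"
  shows "(\<integral>\<^sup>+z. ennreal (poisson_kernel (x - z) y) \<partial>lborel) = 1"
proof -
  define s where "s = (real CARD('m) + 1) / 2"
  have s0: "s > 0" unfolding s_def by simp
  have meas: "(\<lambda>z. ennreal (poisson_kernel (x - z) y)) \<in> borel_measurable borel"
    unfolding poisson_kernel_def
    by (intro measurable_compose[OF _ measurable_ennreal] borel_measurable_continuous_onI continuous_intros)
       (use y in \<open>auto simp: add_pos_nonneg\<close>)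
  have "(\<integral>\<^sup>+z. ennreal (poisson_kernel (x - z) y) \<partial>lborel)
      = (\<integral>\<^sup>+z. ennreal (poisson_kernel (x - z) y) \<partial>(density (distr lborel borel (\<lambda>v. x + (-y) *\<^sub>R v)) (\<lambda>_. ennreal (y ^ CARD('m)))))"
    using lborel_affine[of "-y" x] y by simp
  also have "\<dots> = (\<integral>\<^sup>+v. ennreal (y ^ CARD('m)) * ennreal (poisson_kernel (y *\<^sub>R (v::real^'m)) y) \<partial>lborel)"
    using y meas by (subst nn_integral_density) (auto simp: nn_integral_distr)
  also have "\<dots> = (\<integral>\<^sup>+v. ennreal (Gamma s / pi powr s) * ennreal ((1 + norm (v::real^'m) ^ 2) powr (-s)) \<partial>lborel)"
  proof (rule nn_integral_cong)
    fix v :: "real^'m"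
    have "ennreal (y ^ CARD('m)) * ennreal (poisson_kernel (y *\<^sub>R v) y) = ennreal (y ^ CARD('m) * poisson_kernel (y *\<^sub>R v) y)"
      using y by (simp add: ennreal_mult')
    also have "\<dots> = ennreal (Gamma s / pi powr s) * ennreal ((1 + norm v ^ 2) powr (-s))"
      unfolding s_def poisson_scaled[OF y] using s0 unfolding s_def
      by (intro ennreal_mult') auto
    finally show "ennreal (y ^ CARD('m)) * ennreal (poisson_kernel (y *\<^sub>R v) y) = ennreal (Gamma s / pi powr s) * ennreal ((1 + norm v ^ 2) powr (-s))" .
  qed
  also have "\<dots> = ennreal (Gamma s / pi powr s) * ennreal (pi powr s / Gamma s)"
    using J_integral[where 'a="real^'m"] unfolding s_def by (simp add: nn_integral_cmult)
  also have "\<dots> = 1"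
    using s0 by (simp add: ennreal_mult'[symmetric] less_imp_neq[OF Gamma_real_pos[OF s0], symmetric])
  finally show ?thesis .
qed

lemma harmonic_ext_bound:
  fixes u0 :: "real^'m::finite \<Rightarrow> real^'l::finite"
  assumes y: "y > 0" and hd: "hdot_half u0" and sph: "AE x in lborel. norm (u0 x) = 1"
  shows "norm (harmonic_ext u0 x y) \<le> 1"
proof -
  have [measurable]: "u0 \<in> borel_measurable lborel" using hd unfolding hdot_half_def by simp
  have pk[measurable]: "(\<lambda>z. poisson_kernel (x - z) y) \<in> borel_measurable lborel"
    unfolding poisson_kernel_def measurable_lborel2
    by (intro borel_measurable_continuous_onI continuous_intros)
       (use y in \<open>auto simp: add_pos_nonneg\<close>)
  have pos: "poisson_kernel w y \<ge> 0" for w :: "real^'m"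
    unfolding poisson_kernel_def using y by (simp add: add_pos_nonneg)
  have "norm (harmonic_ext u0 x y) \<le> (\<integral>z. norm (poisson_kernel (x - z) y *\<^sub>R u0 z) \<partial>lborel)"
    unfolding harmonic_ext_def by (rule integral_norm_bound)
  also have "\<dots> = (\<integral>z. poisson_kernel (x - z) y \<partial>lborel)"
  proof (rule integral_cong_AE)
    show "(\<lambda>z. norm (poisson_kernel (x - z) y *\<^sub>R u0 z)) \<in> borel_measurable lborel" by measurable
    show "(\<lambda>z. poisson_kernel (x - z) y) \<in> borel_measurable lborel" by (rule pk)
    show "AE z in lborel. norm (poisson_kernel (x - z) y *\<^sub>R u0 z) = poisson_kernel (x - z) y"
      using sph by eventually_elim (simp add: pos)
  qed
  also have "\<dots> = enn2real (\<integral>\<^sup>+z. ennreal (poisson_kernel (x - z) y) \<partial>lborel)"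
    by (rule integral_eq_nn_integral) (auto simp: pos)
  also have "\<dots> = 1" using poisson_integral[OF y] by simp
  finally show ?thesis .
qed


definition qf :: "real \<Rightarrow> real \<Rightarrow> real" where "qf y t = 6 * t + y\<^sup>2"
definition Rf :: "real \<Rightarrow> real \<Rightarrow> real" where "Rf y t = qf y t powr (-1/4)"

definition hb :: "real \<Rightarrow> real \<Rightarrow> real" where
  "hb y t = Rf y t + 62 * t * Rf y t / qf y t"
definition hy :: "real \<Rightarrow> real \<Rightarrow> real" where
  "hy y t = -(1/2) * y * Rf y t / qf y t - 155 * t * y * Rf y t / (qf y t)\<^sup>2"
definition hyy :: "real \<Rightarrow> real \<Rightarrow> real" where
  "hyy y t = -(1/2) * Rf y t / qf y t + (5/4) * y\<^sup>2 * Rf y t / (qf y t)\<^sup>2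
     - 155 * t * Rf y t / (qf y t)\<^sup>2 + (1395/2) * t * y\<^sup>2 * Rf y t / (qf y t)^3"
definition ht :: "real \<Rightarrow> real \<Rightarrow> real" where
  "ht y t = (121/2) * Rf y t / qf y t - 465 * t * Rf y t / (qf y t)\<^sup>2"

lemma qf_pos: "t > 0 \<Longrightarrow> qf y t > 0"
  unfolding qf_def by (simp add: add_pos_nonneg)

lemma Rf_pos: "t > 0 \<Longrightarrow> Rf y t > 0"
  unfolding Rf_def using qf_pos[of t y] by simp

lemma powr_deriv_aux:
  fixes g :: "real \<Rightarrow> real"
  assumes "DERIV g x :> m" "g x > 0"
  shows "DERIV (\<lambda>x. g x powr p) x :> p * m * (g x powr p / g x)"
proof -
  have "DERIV (\<lambda>x. g x powr p) x :> p * g x powr (p - of_nat 1) * m"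
    by (rule DERIV_fun_powr[OF assms])
  moreover have "g x powr (p - of_nat 1) = g x powr p / g x"
    using assms(2) by (simp add: powr_diff)
  ultimately show ?thesis by (simp add: algebra_simps)
qed

lemma Rf_dy: "t > 0 \<Longrightarrow> DERIV (\<lambda>y. Rf y t) y :> -(1/2) * y * (Rf y t / qf y t)"
proof -
  assume t: "t > 0"
  have "DERIV (\<lambda>y. qf y t) y :> 2 * y"
    unfolding qf_def by (auto intro!: derivative_eq_intros)
  from powr_deriv_aux[OF this qf_pos[OF t], of "-1/4"] show ?thesis
    unfolding Rf_def by (simp add: algebra_simps)
qed

lemma qf_dy: "DERIV (\<lambda>y. qf y t) y :> 2 * y"
  unfolding qf_def by (auto intro!: derivative_eq_intros)

lemma qf_dt: "DERIV (\<lambda>t. qf y t) t :> 6"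
  unfolding qf_def by (auto intro!: derivative_eq_intros)

lemma Rf_dt: "t > 0 \<Longrightarrow> DERIV (\<lambda>t. Rf y t) t :> -(3/2) * (Rf y t / qf y t)"
proof -
  assume t: "t > 0"
  from powr_deriv_aux[OF qf_dt qf_pos[OF t], where p="-1/4"] show ?thesis
    unfolding Rf_def by (simp add: algebra_simps)
qed

lemma hb_dy: "t > 0 \<Longrightarrow> DERIV (\<lambda>y. hb y t) y :> hy y t"
proof -
  assume t: "t > 0"
  note q = qf_pos[OF t, of y]
  show ?thesis unfolding hb_def
    apply (rule DERIV_cong)
     apply (rule DERIV_add)
      apply (rule Rf_dy[OF t])
     apply (rule DERIV_divide)
       apply (rule DERIV_cmult)
       apply (rule Rf_dy[OF t])
      apply (rule qf_dy)
    using q apply simp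
    using q by (simp add: hy_def field_simps power2_eq_square)
qed

lemma Rf_dyE: "t > 0 \<Longrightarrow> D = -(1/2) * y * (Rf y t / qf y t) \<Longrightarrow> ((\<lambda>y. Rf y t) has_real_derivative D) (at y)"
  using Rf_dy by simp
lemma qf_dyE: "D = 2 * y \<Longrightarrow> ((\<lambda>y. qf y t) has_real_derivative D) (at y)"
  using qf_dy by simp
lemma Rf_dtE: "t > 0 \<Longrightarrow> D = -(3/2) * (Rf y t / qf y t) \<Longrightarrow> ((\<lambda>t. Rf y t) has_real_derivative D) (at t)"
  using Rf_dt by simp
lemma qf_dtE: "D = 6 \<Longrightarrow> ((\<lambda>t. qf y t) has_real_derivative D) (at t)"
  using qf_dt by simp

lemma hy_dy: "t > 0 \<Longrightarrow> DERIV (\<lambda>y. hy y t) y :> hyy y t"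
proof -
  assume t: "t > 0"
  note q = qf_pos[OF t, of y]
  have d1: "DERIV (\<lambda>y. -(1/2) * y * Rf y t) y :> (-(1/2) * 1) * Rf y t + (-(1/2) * y * (Rf y t / qf y t)) * (-(1/2) * y)"
    by (rule DERIV_mult[OF DERIV_cmult[OF DERIV_ident] Rf_dy[OF t]])
  have d2: "DERIV (\<lambda>y. 155 * t * y * Rf y t) y :> (155 * t * 1) * Rf y t + (-(1/2) * y * (Rf y t / qf y t)) * (155 * t * y)"
    by (rule DERIV_mult[OF DERIV_cmult[OF DERIV_ident] Rf_dy[OF t]])
  have d3: "DERIV (\<lambda>y. (qf y t)\<^sup>2) y :> of_nat 2 * (2 * y * (qf y t) ^ (2 - Suc 0))"
    by (rule DERIV_power[OF qf_dy])
  show ?thesis unfolding hy_def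
    apply (rule DERIV_cong)
     apply (rule DERIV_diff)
      apply (rule DERIV_divide[OF d1 qf_dy])
    using q apply simp
     apply (rule DERIV_divide[OF d2 d3])
    using q apply simp
    using q by (simp add: hyy_def field_simps power2_eq_square power3_eq_cube)
qed

lemma hb_dt: "t > 0 \<Longrightarrow> DERIV (\<lambda>t. hb y t) t :> ht y t"
proof -
  assume t: "t > 0"
  note q = qf_pos[OF t, of y]
  have d1: "DERIV (\<lambda>t. 62 * t * Rf y t) t :> (62 * 1) * Rf y t + (-(3/2) * (Rf y t / qf y t)) * (62 * t)"
    by (rule DERIV_mult[OF DERIV_cmult[OF DERIV_ident] Rf_dt[OF t]])
  show ?thesis unfolding hb_def
    apply (rule DERIV_cong)
     apply (rule DERIV_add)
      apply (rule Rf_dt[OF t])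
     apply (rule DERIV_divide[OF d1 qf_dt])
    using q apply simp
    using q by (simp add: ht_def field_simps power2_eq_square)
qed

lemma poly_nonneg: "(0::real) \<le> 336 * t\<^sup>2 - 283 * t * Y + (239/4) * Y\<^sup>2"
proof -
  have "336 * t\<^sup>2 - 283 * t * Y + (239/4) * Y\<^sup>2 = (672 * t - 283 * Y)\<^sup>2 / 1344 + (215/1344) * Y\<^sup>2"
    by (simp add: power2_eq_square field_simps)
  thus ?thesis by simp
qed

lemma h_super: "t > 0 \<Longrightarrow> hyy y t \<le> ht y t"
proof -
  assume t: "t > 0"
  define q where "q = qf y t"
  define R where "R = Rf y t"
  have q: "q > 0" unfolding q_def using qf_pos[OF t] .
  have R: "R > 0" unfolding R_def using Rf_pos[OF t] .
  have qd: "q = 6 * t + y\<^sup>2" unfolding q_def qf_def ..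
  have "ht y t - hyy y t = R / q^3 * (61 * q\<^sup>2 - 310 * t * q - (5/4) * y\<^sup>2 * q - (1395/2) * t * y\<^sup>2)"
    unfolding ht_def hyy_def q_def[symmetric] R_def[symmetric] using q
    by (simp add: field_simps power2_eq_square power3_eq_cube)
  also have "61 * q\<^sup>2 - 310 * t * q - (5/4) * y\<^sup>2 * q - (1395/2) * t * y\<^sup>2
      = 336 * t\<^sup>2 - 283 * t * y\<^sup>2 + (239/4) * (y\<^sup>2)\<^sup>2"
    unfolding qd by (simp add: field_simps power2_eq_square)
  finally have "ht y t - hyy y t = R / q^3 * (336 * t\<^sup>2 - 283 * t * y\<^sup>2 + (239/4) * (y\<^sup>2)\<^sup>2)" .
  moreover have "R / q^3 \<ge> 0" using R q by simp
  ultimately have "ht y t - hyy y t \<ge> 0" using poly_nonneg[of t "y\<^sup>2"]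
    by (metis mult_nonneg_nonneg)
  thus ?thesis by simp
qed

lemma hb_ge: "t > 0 \<Longrightarrow> hb y t \<ge> Rf y t"
  unfolding hb_def using Rf_pos[of t y] qf_pos[of t y] by simp

lemma hb_pos: "t > 0 \<Longrightarrow> hb y t > 0"
  using hb_ge Rf_pos by (meson less_le_trans)


lemma second_order_max:
  fixes g g' :: "real \<Rightarrow> real"
  assumes r: "r > 0"
    and le: "\<And>s. \<bar>s\<bar> < r \<Longrightarrow> g s \<le> g 0"
    and d1: "\<And>s. \<bar>s\<bar> < r \<Longrightarrow> DERIV g s :> g' s"
    and d2: "DERIV g' 0 :> c"
  shows "c \<le> 0"
proof (rule ccontr)
  assume "\<not> c \<le> 0"
  hence c: "c > 0" by simp
  have g0: "g' 0 = 0"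
    by (rule DERIV_local_max[OF d1[of 0] r]) (use r le in auto)
  from DERIV_pos_inc_right[OF d2 c] obtain d where d: "d > 0" "\<And>h. h > 0 \<Longrightarrow> h < d \<Longrightarrow> g' 0 < g' (0 + h)"
    by blast
  define h0 where "h0 = min d r / 2"
  have h0: "0 < h0" "h0 < d" "h0 < r" using d r unfolding h0_def by auto
  from MVT2[OF h0(1), of g g'] obtain z where z: "0 < z" "z < h0" "g h0 - g 0 = (h0 - 0) * g' z"
    using d1 h0 by force
  have "g' z > 0" using d(2)[of z] z h0 g0 by simp
  hence "h0 * g' z > 0" using h0 by simp
  hence "g h0 > g 0" using z by simp
  moreover have "g h0 \<le> g 0" using le[of h0] h0 by simp
  ultimately show False by simp
qed

lemma first_order_left_max:
  fixes g :: "real \<Rightarrow> real"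
  assumes r: "r > 0"
    and le: "\<And>s. -r < s \<Longrightarrow> s \<le> 0 \<Longrightarrow> g s \<le> g 0"
    and d: "DERIV g 0 :> c"
  shows "c \<ge> 0"
proof (rule ccontr)
  assume "\<not> c \<ge> 0"
  hence c: "c < 0" by simp
  from DERIV_neg_dec_left[OF d c] obtain e where e: "e > 0" "\<And>h. h > 0 \<Longrightarrow> h < e \<Longrightarrow> g 0 < g (0 - h)"
    by blast
  define h0 where "h0 = min e r / 2"
  have h0: "0 < h0" "h0 < e" "h0 < r" using e r unfolding h0_def by auto
  have "g 0 < g (0 - h0)" using e(2) h0 by blast
  moreover have "g (0 - h0) \<le> g 0" using le[of "-h0"] h0 by simp
  ultimately show False by simp
qed

lemma boundary_increase:
  fixes k k' :: "real \<Rightarrow> real"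
  assumes b: "b > 0"
    and cont: "continuous_on {0..b} k"
    and d: "\<And>y. 0 < y \<Longrightarrow> y < b \<Longrightarrow> DERIV k y :> k' y"
    and pos: "\<And>y. 0 < y \<Longrightarrow> y < b \<Longrightarrow> k' y > 0"
  shows "k 0 < k b"
proof -
  from MVT[OF b cont] obtain l z where z: "0 < z" "z < b" "DERIV k z :> l" "k b - k 0 = (b - 0) * l"
    using d by (meson real_differentiable_def)
  have "l = k' z" using DERIV_unique[OF z(3) d[OF z(1,2)]] .
  hence "b * l > 0" using pos[OF z(1,2)] b by simp
  thus ?thesis using z by simp
qed

lemma deriv_inner_self:
  fixes a :: "real \<Rightarrow> 'v::real_inner"
  assumes "(a has_vector_derivative a') (at s)" "(b has_vector_derivative b') (at s)"
  shows "((\<lambda>s. inner (a s) (b s)) has_real_derivative (inner (a s) b' + inner a' (b s))) (at s)"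
proof -
  have "((\<lambda>s. inner (a s) (b s)) has_derivative (\<lambda>h. inner (a s) (h *\<^sub>R b') + inner (h *\<^sub>R a') (b s))) (at s)"
    using assms unfolding has_vector_derivative_def by (intro has_derivative_inner)
  thus ?thesis unfolding has_field_derivative_def
  proof (rule has_derivative_eq_rhs)
    show "(\<lambda>h. inner (a s) (h *\<^sub>R b') + inner (h *\<^sub>R a') (b s)) = (*) (inner (a s) b' + inner a' (b s))"
      by (simp add: fun_eq_iff algebra_simps)
  qed
qed

lemma line_deriv:
  fixes f :: "'a::real_normed_vector \<Rightarrow> 'b::real_normed_vector"
  assumes "f differentiable (at (p + s *\<^sub>R v))"
  shows "((\<lambda>s. f (p + s *\<^sub>R v)) has_vector_derivative frechet_derivative f (at (p + s *\<^sub>R v)) v) (at s)"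
proof -
  let ?D = "frechet_derivative f (at (p + s *\<^sub>R v))"
  have fd: "(f has_derivative ?D) (at (p + s *\<^sub>R v))"
    using assms frechet_derivative_works by blast
  have ld: "((\<lambda>s. p + s *\<^sub>R v) has_derivative (\<lambda>h. h *\<^sub>R v)) (at s)"
    by (auto intro!: derivative_eq_intros)
  have "((\<lambda>s. f (p + s *\<^sub>R v)) has_derivative (\<lambda>h. ?D (h *\<^sub>R v))) (at s)"
    using diff_chain_at[OF ld fd] by (simp add: o_def)
  moreover have "linear ?D" using has_derivative_linear[OF fd] .
  ultimately show ?thesis unfolding has_vector_derivative_def
    by (simp add: linear_scale)
qed


lemma bdry_tendsto_U:
  fixes U :: "real^'m::finite \<Rightarrow> real \<Rightarrow> real \<Rightarrow> real^'l::finite"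
  assumes cont_bdry: "continuous_on {((x, y), t). y \<ge> 0 \<and> t > 0} (uncurry3 U)"
    and t: "t > 0"
  shows "continuous_on {0..} (\<lambda>y. U x y t)"
proof -
  have "continuous_on {0..} (\<lambda>y. uncurry3 U ((x, y), t))"
    by (rule continuous_on_compose2[OF cont_bdry]) (use t in \<open>auto intro!: continuous_intros\<close>)
  thus ?thesis by (simp add: uncurry3_def)
qed

lemma bdry_tendsto_U':
  fixes U :: "real^'m::finite \<Rightarrow> real \<Rightarrow> real \<Rightarrow> real^'l::finite"
  assumes cont_bdry: "continuous_on {((x, y), t). y \<ge> 0 \<and> t > 0} (uncurry3 U)"
    and t: "t > 0"
  shows "((\<lambda>y. U x y t) \<longlongrightarrow> U x 0 t) (at_right 0)"
proof -
  have "((\<lambda>y. U x y t) \<longlongrightarrow> U x 0 t) (at 0 within {0..})"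
    using bdry_tendsto_U[OF cont_bdry t, of x] unfolding continuous_on_def by auto
  thus ?thesis by (rule tendsto_within_subset) auto
qed

lemma bdry_bound:
  fixes U :: "real^'m::finite \<Rightarrow> real \<Rightarrow> real \<Rightarrow> real^'l::finite"
  assumes cont_bdry: "continuous_on {((x, y), t). y \<ge> 0 \<and> t > 0} (uncurry3 U)"
    and B: "\<forall>x y t. y > 0 \<longrightarrow> t > 0 \<longrightarrow> norm (U x y t) \<le> B"
    and t: "t > 0" and y: "y \<ge> 0"
  shows "norm (U x y t) \<le> B"
proof (cases "y = 0")
  case False thus ?thesis using B t y by auto
next
  case True
  have "((\<lambda>y. norm (U x y t)) \<longlongrightarrow> norm (U x 0 t)) (at_right 0)"
    by (intro tendsto_norm bdry_tendsto_U'[OF cont_bdry t])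
  moreover have "eventually (\<lambda>y. norm (U x y t) \<le> B) (at_right (0::real))"
    using B t by (auto simp: eventually_at_right_less intro: eventually_at_rightI[of 0 1])
  ultimately have "norm (U x 0 t) \<le> B"
    by (rule tendsto_upperbound) simp
  thus ?thesis using True by simp
qed

theorem lemma4p1:
  fixes u0 :: "real^'m::finite \<Rightarrow> real^'l::finite"
    and U :: "real^'m \<Rightarrow> real \<Rightarrow> real \<Rightarrow> real^'l"
    and \<epsilon> :: real
  assumes eps: "\<epsilon> > 0"
    and u0_space: "hdot_half u0"
    and u0_sphere: "AE x in lborel. norm (u0 x) = 1"
    and bounded: "\<exists>B. \<forall>x y t. y > 0 \<longrightarrow> t > 0 \<longrightarrow> norm (U x y t) \<le> B"
    and smooth: "smooth_on {((x, y), t). y > 0 \<and> t > 0} (uncurry3 U)"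
    and heat: "\<And>x y t. y > 0 \<Longrightarrow> t > 0 \<Longrightarrow> dt U x y t = laplacian_xy U x y t"
    and cont_init: "continuous_on {((x, y), t). y > 0 \<and> t \<ge> 0} (uncurry3 U)"
    and init: "\<And>x y. y > 0 \<Longrightarrow> U x y 0 = harmonic_ext u0 x y"
    and cont_bdry: "continuous_on {((x, y), t). y \<ge> 0 \<and> t > 0} (uncurry3 U)"
    and bdry: "\<And>x t. t > 0 \<Longrightarrow>
       ((\<lambda>y. dy U x y t) \<longlongrightarrow> - (1 / \<epsilon>\<^sup>2) *\<^sub>R ((1 - (norm (U x 0 t))\<^sup>2) *\<^sub>R U x 0 t)) (at_right 0)"
  shows "\<forall>x y t. y > 0 \<longrightarrow> t > 0 \<longrightarrow> norm (U x y t) \<le> 1"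
proof (rule ccontr)
  assume "\<not> (\<forall>x y t. y > 0 \<longrightarrow> t > 0 \<longrightarrow> norm (U x y t) \<le> 1)"
  then obtain x1 y1 t1 where p1: "y1 > 0" "t1 > 0" "norm (U x1 y1 t1) > 1" by (meson not_le)
  obtain B where B: "\<forall>x y t. y > 0 \<longrightarrow> t > 0 \<longrightarrow> norm (U x y t) \<le> B" using bounded by blast
  have Bb: "norm (U x y t) \<le> B" if "y \<ge> 0" "t > 0" for x y t
    using bdry_bound[OF cont_bdry B that(2,1)] .
  have B1: "B > 1" using Bb[of y1 t1 x1] p1 by simp
  define f where "f = uncurry3 U"
  have fU: "f ((x, y), t) = U x y t" for x y t by (simp add: f_def uncurry3_def)
  define S where "S = {((x::real^'m, y::real), t::real). y > 0 \<and> t > 0}"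
  have inS: "((x, y), t) \<in> S \<longleftrightarrow> y > 0 \<and> t > 0" for x y t unfolding S_def by simp
  have openS: "open S" using smooth unfolding smooth_on_def S_def by simp
  have fdiff: "higher_dir f vs differentiable (at p)" if "p \<in> S" for vs p
    using smooth openS that unfolding smooth_on_def S_def f_def
    by (auto simp: differentiable_on_eq_differentiable_at)
  define Kc where "Kc = 2 * real CARD('m) + 3"
  define Phi where "Phi = (\<lambda>(x::real^'m) y t. hb y t + inner x x + y\<^sup>2 + Kc * t)"
  have Kc: "Kc > 0" unfolding Kc_def by simp
  have Phi_ge: "Phi x y t \<ge> inner x x + y\<^sup>2 + Rf y t" "Phi x y t \<ge> 0" if "t > 0" for x y t
  proof -
    show "Phi x y t \<ge> inner x x + y\<^sup>2 + Rf y t"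
      unfolding Phi_def using hb_ge[OF that, of y] Kc that by (simp add: add_increasing2 less_imp_le)
    thus "Phi x y t \<ge> 0" using Rf_pos[OF that, of y]
      by (smt (verit) inner_ge_zero zero_le_power2)
  qed
  define W1 where "W1 = (norm (U x1 y1 t1))\<^sup>2"
  have W1: "W1 > 1" unfolding W1_def using p1 by (simp add: one_less_power)
  define \<delta> where "\<delta> = (W1 - 1) / (2 * (Phi x1 y1 t1 + 1))"
  have P1: "Phi x1 y1 t1 \<ge> 0" using Phi_ge(2)[OF p1(2)] .
  have \<delta>: "\<delta> > 0" unfolding \<delta>_def using W1 P1 by (simp add: add_nonneg_pos)
  define M where "M = (\<lambda>x y t. (norm (U x y t))\<^sup>2 - 1 - \<delta> * Phi x y t)"
  define \<mu> where "\<mu> = M x1 y1 t1"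
  have \<mu>: "\<mu> > 0"
  proof -
    have "\<delta> * Phi x1 y1 t1 = (W1 - 1) * (Phi x1 y1 t1 / (2 * (Phi x1 y1 t1 + 1)))"
      unfolding \<delta>_def by simp
    also have "\<dots> < (W1 - 1) * 1"
      using W1 P1 by (intro mult_strict_left_mono) (auto simp: divide_less_eq)
    finally show ?thesis unfolding \<mu>_def M_def W1_def by simp
  qed
  define T where "T = t1"
  define C0 where "C0 = B\<^sup>2 / \<delta> + 1"
  have C0: "C0 > 0" using \<delta> unfolding C0_def by (intro add_nonneg_pos divide_nonneg_pos) auto
  define \<sigma> where "\<sigma> = C0 powr (-4)"
  have \<sigma>: "\<sigma> > 0" unfolding \<sigma>_def using C0 by simp
  have stepA: "inner x x + y\<^sup>2 < C0 \<and> qf y t > \<sigma>" if "y \<ge> 0" "t > 0" "M x y t \<ge> \<mu>" for x y t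
  proof -
    have "norm (U x y t) \<le> B" using Bb that by simp
    hence "(norm (U x y t))\<^sup>2 \<le> B\<^sup>2" by (simp add: power_mono)
    hence "\<delta> * Phi x y t < B\<^sup>2" using that(3) \<mu> unfolding M_def by simp
    hence PB: "Phi x y t < B\<^sup>2 / \<delta>" using \<delta> by (simp add: field_simps)
    have R: "Rf y t > 0" using Rf_pos[OF that(2)] .
    have xy: "inner x x + y\<^sup>2 < C0" using Phi_ge(1)[OF that(2), of x y] PB R unfolding C0_def by simp
    have RC: "Rf y t < C0" using Phi_ge(1)[OF that(2), of x y] PB unfolding C0_def
      by (smt (verit) inner_ge_zero zero_le_power2)
    have "qf y t > \<sigma>"
    proof (rule ccontr)
      assume "\<not> qf y t > \<sigma>"
      hence "qf y t \<le> \<sigma>" by simp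
      hence "\<sigma> powr (-1/4) \<le> qf y t powr (-1/4)"
        by (intro powr_mono2') (use qf_pos[OF that(2)] in auto)
      also have "\<sigma> powr (-1/4) = C0" unfolding \<sigma>_def using C0 by (simp add: powr_powr)
      finally show False using RC unfolding Rf_def by simp
    qed
    thus ?thesis using xy by simp
  qed
  define yl where "yl = sqrt (\<sigma> / 2)"
  have yl: "yl > 0" unfolding yl_def using \<sigma> by simp
  define C where "C = {((x::real^'m, y::real), t::real). inner x x + y\<^sup>2 \<le> C0 \<and> yl \<le> y \<and> 0 \<le> t \<and> t \<le> T}"
  have Csub: "C \<subseteq> {((x, y), t). y > 0 \<and> t \<ge> 0}" unfolding C_def using yl by auto
  have Ccomp: "compact C"
  proof (subst compact_eq_bounded_closed, rule conjI[rotated])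
    have "C = {p. inner (fst (fst p)) (fst (fst p)) + (snd (fst p))\<^sup>2 \<le> C0 \<and> yl \<le> snd (fst p) \<and> 0 \<le> snd p \<and> snd p \<le> T}"
      unfolding C_def by auto
    also have "closed \<dots>"
      by (intro closed_Collect_conj closed_Collect_le continuous_intros)
    finally show "closed C" .
    show "bounded C" unfolding bounded_iff
    proof (intro exI ballI)
      fix p assume "p \<in> C"
      then obtain x y t where p: "p = ((x, y), t)" "inner x x + y\<^sup>2 \<le> C0" "0 \<le> t" "t \<le> T"
        unfolding C_def by auto
      have "norm (x, y) = sqrt (inner x x + y\<^sup>2)" by (simp add: norm_Pair power2_norm_eq_inner)
      also have "\<dots> \<le> sqrt C0" using p by simp
      finally have "norm (x, y) \<le> sqrt C0" .
      hence "norm ((x, y), t) \<le> sqrt C0 + T"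
        using norm_Pair_le[of "(x, y)" t] p by simp
      thus "norm p \<le> sqrt C0 + T" using p by simp
    qed
  qed
  have "uniformly_continuous_on C f"
    by (rule compact_uniformly_continuous[OF continuous_on_subset[OF cont_init[folded f_def] Csub] Ccomp])
  moreover define e where "e = \<mu> / (B + 2)"
  have e: "e > 0" unfolding e_def using \<mu> B1 by simp
  ultimately obtain d where d: "d > 0" and ucd: "\<And>p p'. p \<in> C \<Longrightarrow> p' \<in> C \<Longrightarrow> dist p' p < d \<Longrightarrow> dist (f p') (f p) < e"
    unfolding uniformly_continuous_on_def by metis
  define \<tau> where "\<tau> = min T (min (\<sigma> / 12) d)"
  have \<tau>: "\<tau> > 0" "\<tau> \<le> T" unfolding \<tau>_def T_def using p1 \<sigma> d by auto
  have stepB: "M x y t < \<mu>" if "y \<ge> 0" "t > 0" "t < \<tau>" for x y t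
  proof (rule ccontr)
    assume "\<not> M x y t < \<mu>"
    hence Mge: "M x y t \<ge> \<mu>" by simp
    from stepA[OF that(1,2) Mge] have A: "inner x x + y\<^sup>2 < C0" "qf y t > \<sigma>" by auto
    have "y\<^sup>2 > \<sigma> / 2" using A(2) that(3) unfolding qf_def \<tau>_def by auto
    hence "yl < y" unfolding yl_def using that(1) by (simp add: real_less_lsqrt)
    hence inC: "((x, y), t) \<in> C" "((x, y), 0) \<in> C"
      using A(1) that \<tau> unfolding C_def by auto
    have "dist ((x, y), t) ((x, y), 0) < d" using that \<tau> unfolding \<tau>_def
      by (simp add: dist_Pair_Pair)
    from ucd[OF inC(2) inC(1) this] have dU: "dist (U x y t) (U x y 0) < e" by (simp add: fU)
    have y0: "y > 0" using yl \<open>yl < y\<close> by simp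
    have n0: "norm (U x y 0) \<le> 1" using harmonic_ext_bound[OF y0 u0_space u0_sphere] init[OF y0] by simp
    have nB: "norm (U x y t) \<le> B" using Bb that by simp
    have "(norm (U x y t))\<^sup>2 - 1 < \<mu>"
    proof (cases "norm (U x y t) \<le> 1")
      case True
      hence "(norm (U x y t))\<^sup>2 \<le> 1" by (simp add: power_le_one)
      thus ?thesis using \<mu> by simp
    next
      case False
      have "norm (U x y t) - 1 \<le> dist (U x y t) (U x y 0)"
        using n0 norm_triangle_ineq2[of "U x y t" "U x y 0"] by (simp add: dist_norm)
      hence l1: "norm (U x y t) - 1 < e" using dU by simp
      have "(norm (U x y t))\<^sup>2 - 1 = (norm (U x y t) - 1) * (norm (U x y t) + 1)"
        by (simp add: power2_eq_square algebra_simps)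
      also have "\<dots> \<le> e * (B + 1)"
        using l1 nB False by (intro mult_mono) auto
      also have "\<dots> < \<mu>" unfolding e_def using \<mu> B1 by (simp add: field_simps)
      finally show ?thesis .
    qed
    moreover have "\<delta> * Phi x y t \<ge> 0" using Phi_ge(2)[OF that(2)] \<delta> by simp
    ultimately have "M x y t < \<mu>" unfolding M_def by simp
    thus False using Mge by simp
  qed
  obtain x0 y0 t0 where p0: "y0 \<ge> 0" "\<tau> \<le> t0" "t0 \<le> T"
    and max: "\<And>x y t. y \<ge> 0 \<Longrightarrow> t > 0 \<Longrightarrow> t \<le> T \<Longrightarrow> M x y t \<le> M x0 y0 t0"
    and Mp0: "M x0 y0 t0 \<ge> \<mu>"
  proof -
    define K where "K = {((x::real^'m, y::real), t::real). inner x x + y\<^sup>2 \<le> C0 \<and> 0 \<le> y \<and> \<tau> \<le> t \<and> t \<le> T}"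
    have Ksub: "K \<subseteq> {((x, y), t). y \<ge> 0 \<and> t > 0}" unfolding K_def using \<tau> by auto
    have Kcomp: "compact K"
    proof (subst compact_eq_bounded_closed, rule conjI[rotated])
      have "K = {p. inner (fst (fst p)) (fst (fst p)) + (snd (fst p))\<^sup>2 \<le> C0 \<and> 0 \<le> snd (fst p) \<and> \<tau> \<le> snd p \<and> snd p \<le> T}"
        unfolding K_def by auto
      also have "closed \<dots>"
        by (intro closed_Collect_conj closed_Collect_le continuous_intros)
      finally show "closed K" .
      show "bounded K" unfolding bounded_iff
      proof (intro exI ballI)
        fix p assume "p \<in> K"
        then obtain x y t where p: "p = ((x, y), t)" "inner x x + y\<^sup>2 \<le> C0" "\<tau> \<le> t" "t \<le> T"
          unfolding K_def by auto
        have "norm (x, y) = sqrt (inner x x + y\<^sup>2)" by (simp add: norm_Pair power2_norm_eq_inner)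
        also have "\<dots> \<le> sqrt C0" using p by simp
        finally have "norm (x, y) \<le> sqrt C0" .
        hence "norm ((x, y), t) \<le> sqrt C0 + T"
          using norm_Pair_le[of "(x, y)" t] p \<tau> by simp
        thus "norm p \<le> sqrt C0 + T" using p by simp
      qed
    qed
    define Mf where "Mf = (\<lambda>p. (norm (f p))\<^sup>2 - 1 - \<delta> * (hb (snd (fst p)) (snd p) + inner (fst (fst p)) (fst (fst p)) + (snd (fst p))\<^sup>2 + Kc * snd p))"
    have MfM: "Mf ((x, y), t) = M x y t" for x y t
      unfolding Mf_def M_def Phi_def by (simp add: fU)
    have fK: "continuous_on K f"
      by (rule continuous_on_subset[OF cont_bdry[folded f_def] Ksub])
    have tK: "\<And>p. p \<in> K \<Longrightarrow> snd p > 0" using Ksub by auto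
    have hK: "continuous_on K (\<lambda>p. hb (snd (fst p)) (snd p))"
      unfolding hb_def Rf_def qf_def
      by (intro continuous_intros) (auto dest!: tK, (smt (verit) zero_le_power2)+)
    have "continuous_on K Mf" unfolding Mf_def
      by (intro continuous_intros fK hK)
    moreover have p1K: "((x1, y1), t1) \<in> K"
    proof -
      have "M x1 y1 t1 \<ge> \<mu>" unfolding \<mu>_def by simp
      from stepA[OF _ p1(2) this] p1 have "inner x1 x1 + y1\<^sup>2 < C0" by simp
      moreover have "\<tau> \<le> t1" using stepB[of y1 t1 x1] p1 unfolding \<mu>_def by force
      ultimately show ?thesis unfolding K_def T_def using p1 by simp
    qed
    ultimately obtain p0 where p0K: "p0 \<in> K" and p0max: "\<And>p. p \<in> K \<Longrightarrow> Mf p \<le> Mf p0"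
      using continuous_attains_sup[OF Kcomp] by blast
    obtain x0 y0 t0 where p0e: "p0 = ((x0, y0), t0)" by (metis prod.collapse)
    have "M x1 y1 t1 \<le> M x0 y0 t0" using p0max[OF p1K] unfolding p0e MfM .
    hence Mp0: "M x0 y0 t0 \<ge> \<mu>" unfolding \<mu>_def .
    have maxg: "M x y t \<le> M x0 y0 t0" if "y \<ge> 0" "t > 0" "t \<le> T" for x y t
    proof (cases "M x y t \<ge> \<mu>")
      case True
      from stepA[OF that(1,2) True] have "inner x x + y\<^sup>2 < C0" by simp
      moreover have "\<tau> \<le> t" using stepB[OF that(1,2), of x] True by (meson not_le order.strict_trans1)
      ultimately have "((x, y), t) \<in> K" unfolding K_def using that by simp
      from p0max[OF this] show ?thesis unfolding p0e MfM .
    next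
      case False thus ?thesis using Mp0 by simp
    qed
    have "y0 \<ge> 0" "\<tau> \<le> t0" "t0 \<le> T" using p0K unfolding p0e K_def by auto
    thus thesis using that maxg Mp0 by blast
  qed
  have t0: "t0 > 0" using p0 \<tau> by simp
  have MU: "M x y t = inner (U x y t) (U x y t) - 1 - \<delta> * (hb y t + inner x x + y\<^sup>2 + Kc * t)" for x y t
    unfolding M_def Phi_def by (simp add: power2_norm_eq_inner)
  show False
  proof (cases "y0 = 0")
    case True
    define U0 where "U0 = U x0 0 t0"
    define k' where "k' = (\<lambda>y. 2 * inner (U x0 y t0) (dy U x0 y t0) - \<delta> * (hy y t0 + 2 * y))"
    have Uline: "(\<lambda>s. f (((x0, 0), t0) + s *\<^sub>R e_y)) = (\<lambda>s. U x0 s t0)"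
      by (simp add: e_y_def fU)
    have dU: "((\<lambda>y. U x0 y t0) has_vector_derivative dy U x0 y t0) (at y)" if "y > 0" for y
    proof -
      have pS: "((x0, 0), t0) + y *\<^sub>R e_y \<in> S" using that t0 by (simp add: e_y_def inS)
      have "((\<lambda>s. f (((x0, 0), t0) + s *\<^sub>R e_y)) has_vector_derivative
             frechet_derivative f (at (((x0, 0), t0) + y *\<^sub>R e_y)) e_y) (at y)"
        using line_deriv[of f] fdiff[OF pS, of "[]"] by simp
      thus ?thesis unfolding Uline by (simp add: dy_def e_y_def f_def)
    qed
    have dk: "DERIV (\<lambda>y. M x0 y t0) y :> k' y" if "y > 0" for y
    proof -
      have d1: "DERIV (\<lambda>y. inner (U x0 y t0) (U x0 y t0)) y :> inner (U x0 y t0) (dy U x0 y t0) + inner (dy U x0 y t0) (U x0 y t0)"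
        by (rule deriv_inner_self[OF dU[OF that] dU[OF that]])
      have d2: "DERIV (\<lambda>y. hb y t0 + inner x0 x0 + y\<^sup>2 + Kc * t0) y :> hy y t0 + 0 + 2 * y + 0"
        by (intro DERIV_add hb_dy[OF t0] DERIV_const) (auto intro!: derivative_eq_intros)
      have "DERIV (\<lambda>y. inner (U x0 y t0) (U x0 y t0) - 1 - \<delta> * (hb y t0 + inner x0 x0 + y\<^sup>2 + Kc * t0)) y
            :> (inner (U x0 y t0) (dy U x0 y t0) + inner (dy U x0 y t0) (U x0 y t0)) - 0 - \<delta> * (hy y t0 + 0 + 2 * y + 0)"
        by (intro DERIV_diff d1 DERIV_const DERIV_cmult d2)
      thus ?thesis unfolding MU k'_def by (simp add: inner_commute)
    qed
    define L where "L = 2 * inner U0 (- (1 / \<epsilon>\<^sup>2) *\<^sub>R ((1 - (norm U0)\<^sup>2) *\<^sub>R U0)) - \<delta> * (hy 0 t0 + 2 * 0)"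
    have W0: "(norm U0)\<^sup>2 > 1"
    proof -
      have "M x0 0 t0 > 0" using Mp0 \<mu> True by simp
      moreover have "\<delta> * Phi x0 0 t0 \<ge> 0" using Phi_ge(2)[OF t0] \<delta> by simp
      ultimately show ?thesis unfolding M_def U0_def by simp
    qed
    have L: "L > 0"
    proof -
      have "hy 0 t0 = 0" unfolding hy_def by simp
      hence "L = 2 * ((norm U0)\<^sup>2 - 1) * (norm U0)\<^sup>2 / \<epsilon>\<^sup>2"
        unfolding L_def by (simp add: power2_norm_eq_inner inner_diff_right algebra_simps diff_divide_distrib)
      moreover have "(2 * (norm U0)\<^sup>2 - 2) * (norm U0)\<^sup>2 > 0" using W0 by (intro mult_pos_pos) auto
      ultimately show ?thesis using eps by simp
    qed
    have hyc: "isCont (\<lambda>y. hy y t0) 0" by (rule DERIV_isCont[OF hy_dy[OF t0]])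
    have "(k' \<longlongrightarrow> L) (at_right 0)"
      unfolding k'_def L_def U0_def
      by (intro tendsto_intros bdry_tendsto_U'[OF cont_bdry t0] bdry[OF t0]
            tendsto_within_subset[OF hyc[unfolded isCont_def]]) auto
    hence "eventually (\<lambda>y. k' y > 0) (at_right 0)" using L by (rule order_tendstoD)
    then obtain b where b: "b > 0" "\<And>y. 0 < y \<Longrightarrow> y < b \<Longrightarrow> k' y > 0"
      unfolding eventually_at_right_field by auto
    have cU: "continuous_on {0..b/2} (\<lambda>y. U x0 y t0)"
      by (rule continuous_on_subset[OF bdry_tendsto_U[OF cont_bdry t0]]) auto
    have ch: "continuous_on {0..b/2} (\<lambda>y. hb y t0)"
      by (intro continuous_at_imp_continuous_on ballI DERIV_isCont[OF hb_dy[OF t0]])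
    have "M x0 0 t0 < M x0 (b/2) t0"
    proof (rule boundary_increase[of "b/2" "\<lambda>y. M x0 y t0" k'])
      show "continuous_on {0..b/2} (\<lambda>y. M x0 y t0)" unfolding MU
        by (intro continuous_intros cU ch)
    qed (use b dk in auto)
    moreover have "M x0 (b/2) t0 \<le> M x0 y0 t0" using max[of "b/2" t0 x0] b t0 p0 by simp
    ultimately show False using True by simp
  next
    case False
    hence y0: "y0 > 0" using p0 by simp
    define p where "p = ((x0, y0), t0)"
    have pS: "p \<in> S" unfolding p_def using y0 t0 by (simp add: inS)
    have fp: "f p = U x0 y0 t0" unfolding p_def by (simp add: fU)
    have second: "2 * (inner (f p) (higher_dir f [v, v] p) + inner (higher_dir f [v] p) (higher_dir f [v] p)) - \<delta> * c \<le> 0"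
      if r: "r > 0" and inS': "\<And>s. \<bar>s\<bar> < r \<Longrightarrow> p + s *\<^sub>R v \<in> S"
        and dP: "\<And>s. \<bar>s\<bar> < r \<Longrightarrow> DERIV P s :> P' s" and dP': "DERIV P' 0 :> c"
        and le: "\<And>s. \<bar>s\<bar> < r \<Longrightarrow> inner (f (p + s *\<^sub>R v)) (f (p + s *\<^sub>R v)) - \<delta> * P s \<le> inner (f p) (f p) - \<delta> * P 0"
      for v P P' c r
    proof -
      define g where "g = (\<lambda>s. inner (f (p + s *\<^sub>R v)) (f (p + s *\<^sub>R v)) - \<delta> * P s)"
      define g' where "g' = (\<lambda>s. 2 * inner (f (p + s *\<^sub>R v)) (higher_dir f [v] (p + s *\<^sub>R v)) - \<delta> * P' s)"
      have av: "((\<lambda>s. f (p + s *\<^sub>R v)) has_vector_derivative higher_dir f [v] (p + s *\<^sub>R v)) (at s)"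
        if "\<bar>s\<bar> < r" for s
        using line_deriv[of f p s v] fdiff[OF inS'[OF that], of "[]"] by simp
      have bv: "((\<lambda>s. higher_dir f [v] (p + s *\<^sub>R v)) has_vector_derivative higher_dir f [v, v] p) (at 0)"
        using line_deriv[of "higher_dir f [v]" p 0 v] fdiff[OF pS, of "[v]"] by simp
      have D1: "DERIV g s :> g' s" if "\<bar>s\<bar> < r" for s
      proof -
        have "DERIV g s :> (inner (f (p + s *\<^sub>R v)) (higher_dir f [v] (p + s *\<^sub>R v)) + inner (higher_dir f [v] (p + s *\<^sub>R v)) (f (p + s *\<^sub>R v))) - \<delta> * P' s"
          unfolding g_def by (intro DERIV_diff DERIV_cmult dP[OF that] deriv_inner_self av[OF that])
        thus ?thesis unfolding g'_def by (simp add: inner_commute)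
      qed
      have D2: "DERIV g' 0 :> 2 * (inner (f p) (higher_dir f [v, v] p) + inner (higher_dir f [v] p) (higher_dir f [v] p)) - \<delta> * c"
      proof -
        have "DERIV g' 0 :> 2 * (inner (f (p + 0 *\<^sub>R v)) (higher_dir f [v, v] p) + inner (higher_dir f [v] (p + 0 *\<^sub>R v)) (higher_dir f [v] (p + 0 *\<^sub>R v))) - \<delta> * c"
          unfolding g'_def by (intro DERIV_diff DERIV_cmult dP' deriv_inner_self av bv) (use r in simp)
        thus ?thesis by simp
      qed
      have le': "\<And>s. \<bar>s\<bar> < r \<Longrightarrow> g s \<le> g 0" using le by (simp add: g_def)
      show ?thesis by (rule second_order_max[OF r le' D1 D2])
    qed
    have xdir: "inner (f p) (higher_dir f [e_x i, e_x i] p) \<le> \<delta>" for i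
    proof -
      define a :: "real^'m" where "a = axis i 1"
      have aa: "inner a a = 1" unfolding a_def by (simp add: inner_axis_axis)
      have pe: "p + s *\<^sub>R e_x i = ((x0 + s *\<^sub>R a, y0), t0)" for s
        unfolding p_def e_x_def a_def by simp
      have lin: "((\<lambda>s. x0 + s *\<^sub>R a) has_vector_derivative a) (at s)" for s
        by (auto intro!: derivative_eq_intros simp: has_vector_derivative_def)
      have "2 * (inner (f p) (higher_dir f [e_x i, e_x i] p) + inner (higher_dir f [e_x i] p) (higher_dir f [e_x i] p)) - \<delta> * (2 * inner a a) \<le> 0"
      proof (rule second[of 1 "e_x i" "\<lambda>s. hb y0 t0 + inner (x0 + s *\<^sub>R a) (x0 + s *\<^sub>R a) + y0\<^sup>2 + Kc * t0"
                             "\<lambda>s. 2 * inner (x0 + s *\<^sub>R a) a"])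
        show "p + s *\<^sub>R e_x i \<in> S" for s unfolding pe using y0 t0 by (simp add: inS)
        show "DERIV (\<lambda>s. hb y0 t0 + inner (x0 + s *\<^sub>R a) (x0 + s *\<^sub>R a) + y0\<^sup>2 + Kc * t0) s :> 2 * inner (x0 + s *\<^sub>R a) a" for s
        proof -
          have "DERIV (\<lambda>s. hb y0 t0 + inner (x0 + s *\<^sub>R a) (x0 + s *\<^sub>R a) + y0\<^sup>2 + Kc * t0) s :> 0 + (inner (x0 + s *\<^sub>R a) a + inner a (x0 + s *\<^sub>R a)) + 0 + 0"
            by (intro DERIV_add DERIV_const deriv_inner_self lin)
          thus ?thesis by (simp add: inner_commute)
        qed
        show "DERIV (\<lambda>s. 2 * inner (x0 + s *\<^sub>R a) a) 0 :> 2 * inner a a"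
          by (auto intro!: derivative_eq_intros simp: inner_add_left)
        show "inner (f (p + s *\<^sub>R e_x i)) (f (p + s *\<^sub>R e_x i)) - \<delta> * (hb y0 t0 + inner (x0 + s *\<^sub>R a) (x0 + s *\<^sub>R a) + y0\<^sup>2 + Kc * t0)
            \<le> inner (f p) (f p) - \<delta> * (hb y0 t0 + inner (x0 + 0 *\<^sub>R a) (x0 + 0 *\<^sub>R a) + y0\<^sup>2 + Kc * t0)" for s
          using max[of y0 t0 "x0 + s *\<^sub>R a"] y0 t0 p0 unfolding pe fp MU by (simp add: fU)
      qed simp
      moreover have "inner (higher_dir f [e_x i] p) (higher_dir f [e_x i] p) \<ge> 0" by simp
      ultimately show ?thesis unfolding aa by argo
    qed
    have ydir: "2 * inner (f p) (higher_dir f [e_y, e_y] p) \<le> \<delta> * (hyy y0 t0 + 2)"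
    proof -
      have pe: "p + s *\<^sub>R e_y = ((x0, y0 + s), t0)" for s
        unfolding p_def e_y_def by simp
      have sh: "DERIV (\<lambda>s. y0 + s) s :> 1" for s by (auto intro!: derivative_eq_intros)
      have hs: "DERIV (\<lambda>s. hb (y0 + s) t0) s :> hy (y0 + s) t0" for s
        using DERIV_chain2[OF hb_dy[OF t0, of "y0 + s"] sh[of s]] by simp
      have hys: "DERIV (\<lambda>s. hy (y0 + s) t0) s :> hyy (y0 + s) t0" for s
        using DERIV_chain2[OF hy_dy[OF t0, of "y0 + s"] sh[of s]] by simp
      have "2 * (inner (f p) (higher_dir f [e_y, e_y] p) + inner (higher_dir f [e_y] p) (higher_dir f [e_y] p)) - \<delta> * (hyy y0 t0 + 2) \<le> 0"
      proof (rule second[of y0 "e_y" "\<lambda>s. hb (y0 + s) t0 + inner x0 x0 + (y0 + s)\<^sup>2 + Kc * t0"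
                             "\<lambda>s. hy (y0 + s) t0 + 2 * (y0 + s)"])
        show "p + s *\<^sub>R e_y \<in> S" if "\<bar>s\<bar> < y0" for s unfolding pe using that t0 by (simp add: inS)
        show "DERIV (\<lambda>s. hb (y0 + s) t0 + inner x0 x0 + (y0 + s)\<^sup>2 + Kc * t0) s :> hy (y0 + s) t0 + 2 * (y0 + s)" for s
        proof -
          have d: "DERIV (\<lambda>s. (y0 + s)\<^sup>2) s :> 2 * (y0 + s)" by (auto intro!: derivative_eq_intros)
          have "DERIV (\<lambda>s. hb (y0 + s) t0 + inner x0 x0 + (y0 + s)\<^sup>2 + Kc * t0) s :> hy (y0 + s) t0 + 0 + 2 * (y0 + s) + 0"
            by (intro DERIV_add hs DERIV_const d)
          thus ?thesis by simp
        qed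
        show "DERIV (\<lambda>s. hy (y0 + s) t0 + 2 * (y0 + s)) 0 :> hyy y0 t0 + 2"
        proof -
          have d: "DERIV (\<lambda>s. 2 * (y0 + s)) 0 :> 2" by (auto intro!: derivative_eq_intros)
          have "DERIV (\<lambda>s. hy (y0 + s) t0 + 2 * (y0 + s)) 0 :> hyy (y0 + 0) t0 + 2"
            by (intro DERIV_add hys d)
          thus ?thesis by simp
        qed
        show "inner (f (p + s *\<^sub>R e_y)) (f (p + s *\<^sub>R e_y)) - \<delta> * (hb (y0 + s) t0 + inner x0 x0 + (y0 + s)\<^sup>2 + Kc * t0)
            \<le> inner (f p) (f p) - \<delta> * (hb (y0 + 0) t0 + inner x0 x0 + (y0 + 0)\<^sup>2 + Kc * t0)" if "\<bar>s\<bar> < y0" for s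
          using max[of "y0 + s" t0 x0] that y0 t0 p0 unfolding pe fp MU by (simp add: fU)
      qed (use y0 in simp)
      moreover have "inner (higher_dir f [e_y] p) (higher_dir f [e_y] p) \<ge> 0" by simp
      ultimately show ?thesis by argo
    qed
    have tdir: "2 * inner (f p) (higher_dir f [e_t] p) \<ge> \<delta> * (ht y0 t0 + Kc)"
    proof -
      have pe: "p + s *\<^sub>R e_t = ((x0, y0), t0 + s)" for s
        unfolding p_def e_t_def by simp
      have av: "((\<lambda>s. f (p + s *\<^sub>R e_t)) has_vector_derivative higher_dir f [e_t] p) (at 0)"
        using line_deriv[of f p 0 e_t] fdiff[OF pS, of "[]"] by simp
      have sh: "DERIV (\<lambda>s. t0 + s) 0 :> 1" by (auto intro!: derivative_eq_intros)
      have hs: "DERIV (\<lambda>s. hb y0 (t0 + s)) 0 :> ht y0 t0"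
        using DERIV_chain2[of "\<lambda>t. hb y0 t" "ht y0 t0" "\<lambda>s. t0 + s" 0, OF _ sh] hb_dt[OF t0, of y0] by simp
      define g where "g = (\<lambda>s. inner (f (p + s *\<^sub>R e_t)) (f (p + s *\<^sub>R e_t)) - 1 - \<delta> * (hb y0 (t0 + s) + inner x0 x0 + y0\<^sup>2 + Kc * (t0 + s)))"
      have "DERIV g 0 :> (inner (f (p + 0 *\<^sub>R e_t)) (higher_dir f [e_t] p) + inner (higher_dir f [e_t] p) (f (p + 0 *\<^sub>R e_t))) - 0 - \<delta> * (ht y0 t0 + 0 + 0 + Kc * 1)"
        unfolding g_def
        by (intro DERIV_diff DERIV_const DERIV_cmult DERIV_add deriv_inner_self av hs)
           (auto intro!: derivative_eq_intros)
      hence "DERIV g 0 :> 2 * inner (f p) (higher_dir f [e_t] p) - \<delta> * (ht y0 t0 + Kc)"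
        by (simp add: inner_commute)
      moreover have "g s \<le> g 0" if "-t0 < s" "s \<le> 0" for s
        using max[of y0 "t0 + s" x0] that y0 t0 p0 unfolding g_def pe fp MU by (simp add: fU)
      ultimately have "2 * inner (f p) (higher_dir f [e_t] p) - \<delta> * (ht y0 t0 + Kc) \<ge> 0"
        by (intro first_order_left_max[OF t0, of g]) auto
      thus ?thesis by simp
    qed
    have heq: "higher_dir f [e_t] p = (\<Sum>i\<in>UNIV. higher_dir f [e_x i, e_x i] p) + higher_dir f [e_y, e_y] p"
      using heat[OF y0 t0] unfolding dt_def laplacian_xy_def f_def p_def .
    have "inner (f p) (higher_dir f [e_t] p) = (\<Sum>i\<in>UNIV. inner (f p) (higher_dir f [e_x i, e_x i] p)) + inner (f p) (higher_dir f [e_y, e_y] p)"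
      unfolding heq by (simp add: inner_add_right inner_sum_right)
    also have "(\<Sum>i\<in>UNIV. inner (f p) (higher_dir f [e_x i, e_x i] p)) \<le> (\<Sum>i\<in>(UNIV::'m set). \<delta>)"
      by (intro sum_mono xdir)
    finally have "2 * inner (f p) (higher_dir f [e_t] p) \<le> 2 * (real CARD('m) * \<delta>) + \<delta> * (hyy y0 t0 + 2)"
      using ydir by simp
    hence "\<delta> * (ht y0 t0 + Kc) \<le> \<delta> * (2 * real CARD('m) + hyy y0 t0 + 2)"
      using tdir by (simp add: algebra_simps)
    hence "ht y0 t0 + Kc \<le> 2 * real CARD('m) + hyy y0 t0 + 2"
      using \<delta> by simp
    hence "ht y0 t0 + 1 \<le> hyy y0 t0" unfolding Kc_def by simp
    thus False using h_super[OF t0, of y0] by simp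
  qed
qed

end
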